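(* Let $M\geq 1$ and $P=4M-3$. Let $E$ be a $P\times P$ diagonal operator on $\ell(\mathbb{Z}_P)$ with diagonal entries $\{\omega_k\}_{k=0}^{4M-4}$ satisfying $|\omega_k|=1$ for all $k$ and $\omega_j\overline{\omega_k}\notin\mathbb{R}$ for all $j\neq k$. For $x\in\ell(\mathbb{Z}_P)$ with $x[p]=0$ for all $p=M,\ldots,4M-4$ (i.e. an $M$-dimensional complex signal embedded by zero-padding), the signal $x$ is determined up to a global phase factor by the pair $\operatorname{CirAut}(x+Rx)$ and $\operatorname{CirAut}(Ex+REx)$: if $x,y$ are two such signals with $\operatorname{CirAut}(x+Rx)=\operatorname{CirAut}(y+Ry)$ and $\operatorname{CirAut}(Ex+REx)=\operatorname{CirAut}(Ey+REy)$, then $y=\omega x$ for some $\omega\in\mathbb{C}$ with $|\omega|=1$.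
   Context: $\ell(\mathbb{Z}_P)$ denotes the space of $P$-periodic functions $u\colon\mathbb{Z}\to\mathbb{C}$ (i.e. $u[p+P]=u[p]$), with inner product $\langle u,v\rangle=\sum_{p\in\mathbb{Z}_P}u[p]\overline{v[p]}$. The translation operator is $(T^pu)[p']:=u[p'-p]$ and the reversal operator is $(Ru)[p]:=u[-p]$. The circular autocorrelation of $u$ is $\operatorname{CirAut}(u)\in\ell(\mathbb{Z}_P)$ with $\operatorname{CirAut}(u)[p]:=\langle u,T^pu\rangle=\sum_{p'\in\mathbb{Z}_P}u[p']\overline{u[p'-p]}$. The operator $E$ acts by $(Ex)[k]=\omega_kx[k]$ for $k=0,\ldots,P-1$. *)

theory Defs
  imports "HOL-Analysis.Analysis"
begin

text \<open>Elements of l(Z_P) are represented as P-periodic functions int => complex.\<close>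

definition periodic :: "nat \<Rightarrow> (int \<Rightarrow> complex) \<Rightarrow> bool" where
  "periodic P u \<longleftrightarrow> (\<forall>p. u (p + int P) = u p)"

definition inner_ZP :: "nat \<Rightarrow> (int \<Rightarrow> complex) \<Rightarrow> (int \<Rightarrow> complex) \<Rightarrow> complex" where
  "inner_ZP P u v = (\<Sum>p\<in>{0..<int P}. u p * cnj (v p))"

definition transl :: "int \<Rightarrow> (int \<Rightarrow> complex) \<Rightarrow> (int \<Rightarrow> complex)" where
  "transl p u = (\<lambda>p'. u (p' - p))"

definition revop :: "(int \<Rightarrow> complex) \<Rightarrow> (int \<Rightarrow> complex)" where
  "revop u = (\<lambda>p. u (- p))"

definition CirAut :: "nat \<Rightarrow> (int \<Rightarrow> complex) \<Rightarrow> (int \<Rightarrow> complex)" where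
  "CirAut P u = (\<lambda>p. inner_ZP P u (transl p u))"

definition diagop :: "nat \<Rightarrow> (nat \<Rightarrow> complex) \<Rightarrow> (int \<Rightarrow> complex) \<Rightarrow> (int \<Rightarrow> complex)" where
  "diagop P \<omega> x = (\<lambda>k. \<omega> (nat (k mod int P)) * x k)"

end

theory Submission
  imports Defs
begin


definition acr :: "nat \<Rightarrow> (nat \<Rightarrow> complex) \<Rightarrow> nat \<Rightarrow> complex" where
  "acr N u p = (\<Sum>i<N. u i * cnj (u (i + p)))"
definition cnv :: "nat \<Rightarrow> (nat \<Rightarrow> complex) \<Rightarrow> nat \<Rightarrow> complex" where
  "cnv N u p = (\<Sum>i<N. if i \<le> p then u i * cnj (u (p - i)) else 0)"
definition SS :: "nat \<Rightarrow> (nat \<Rightarrow> complex) \<Rightarrow> nat \<Rightarrow> complex" where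
  "SS N u p = acr N u p + cnj (acr N u p) + cnv N u p + (if p = 0 then u 0 * cnj (u 0) else 0)"

lemma nonreal_zero:
  fixes D \<alpha> :: complex
  assumes "Re D = 0" "Re (\<alpha> * D) = 0" "\<alpha> \<notin> \<real>"
  shows "D = 0"
proof -
  have "Im \<alpha> \<noteq> 0" using assms(3) complex_is_Real_iff by auto
  have "Im \<alpha> * Im D = 0" using assms(1,2) by simp
  hence "Im D = 0" using \<open>Im \<alpha> \<noteq> 0\<close> by simp
  thus ?thesis using assms(1) complex_eq_iff by auto
qed

lemma SS_zero_above:
  assumes u0: "\<forall>i>m. u i = 0" and mp: "2*m < p"
  shows "SS N u p = 0"
proof -
  have "acr N u p = 0" unfolding acr_def
    by (rule sum.neutral) (use u0 mp in auto)
  moreover have "cnv N u p = 0" unfolding cnv_def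
  proof (rule sum.neutral, intro ballI)
    fix i assume "i \<in> {..<N}"
    show "(if i \<le> p then u i * cnj (u (p - i)) else 0) = 0"
    proof (cases "i \<le> m")
      case True then show ?thesis using u0 mp by auto
    next
      case False then show ?thesis using u0 by auto
    qed
  qed
  ultimately show ?thesis unfolding SS_def using mp by simp
qed

lemma SS_zero_fun: "SS N (\<lambda>_. 0) p = 0"
  by (auto simp: SS_def acr_def cnv_def intro!: sum.neutral)

lemma SS_lead:
  assumes u0: "\<forall>i>m. u i = 0" and mN: "m < N"
  shows "SS N u (2*m) = (if m = 0 then 4 else 1) * (u m * cnj (u m))"
proof -
  have A: "acr N u (2*m) = (if m = 0 then u m * cnj (u m) else 0)"
  proof -
    have "acr N u (2*m) = (\<Sum>i<N. if i = 0 then (if m = 0 then u m * cnj (u m) else 0) else 0)"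
      unfolding acr_def
    proof (rule sum.cong[OF refl])
      fix i assume "i \<in> {..<N}"
      show "u i * cnj (u (i + 2 * m)) = (if i = 0 then (if m = 0 then u m * cnj (u m) else 0) else 0)"
        using u0 by (cases "i = 0 \<and> m = 0") auto
    qed
    also have "\<dots> = (if m = 0 then u m * cnj (u m) else 0)" using mN by simp
    finally show ?thesis .
  qed
  have C: "cnv N u (2*m) = u m * cnj (u m)"
  proof -
    have "cnv N u (2*m) = (\<Sum>i<N. if i = m then u m * cnj (u m) else 0)"
      unfolding cnv_def
    proof (rule sum.cong[OF refl])
      fix i assume "i \<in> {..<N}"
      show "(if i \<le> 2*m then u i * cnj (u (2*m - i)) else 0) = (if i = m then u m * cnj (u m) else 0)"
      proof (cases "i = m")
        case True then show ?thesis by (simp add: mult_2)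
      next
        case False
        then have "i > m \<or> 2*m - i > m \<or> i > 2*m" by auto
        then show ?thesis using u0 False by auto
      qed
    qed
    also have "\<dots> = u m * cnj (u m)" using mN by simp
    finally show ?thesis .
  qed
  have R: "cnj (u m * cnj (u m)) = u m * cnj (u m)" by (simp add: mult.commute)
  show ?thesis unfolding SS_def A C using R by auto
qed

lemma step:
  fixes u v :: "nat \<Rightarrow> complex"
  assumes u0: "\<forall>i>m. u i = 0" and v0: "\<forall>i>m. v i = 0" and k1: "1 \<le> k" and km: "k \<le> m"
    and mN: "m < N"
    and vc: "\<forall>i. m < i + k \<longrightarrow> v i = c * u i" and cc: "c * cnj c = 1"
    and eq: "SS N u (2*m-k) = SS N v (2*m-k)"
  shows "Re (v m * cnj (v (m-k)) - u m * cnj (u (m-k))) = 0"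
proof -
  define p where "p = 2*m-k"
  define D where "D = v m * cnj (v (m-k)) - u m * cnj (u (m-k))"
  have p0: "p \<noteq> 0" using k1 km p_def by simp
  have A: "acr N v p - acr N u p = (if k = m then cnj D else 0)"
  proof -
    have "acr N v p - acr N u p = (\<Sum>i<N. v i * cnj (v (i+p)) - u i * cnj (u (i+p)))"
      unfolding acr_def by (simp add: sum_subtractf)
    also have "\<dots> = (\<Sum>i<N. if i = 0 then (if k = m then cnj D else 0) else 0)"
    proof (rule sum.cong[OF refl])
      fix i assume "i \<in> {..<N}"
      show "v i * cnj (v (i+p)) - u i * cnj (u (i+p)) = (if i = 0 then (if k = m then cnj D else 0) else 0)"
      proof (cases "i = 0 \<and> k = m")
        case True then show ?thesis using D_def p_def by simp
      next
        case False then have "i + p > m" using p_def km k1 by auto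
        then show ?thesis using u0 v0 False by auto
      qed
    qed
    also have "\<dots> = (if k = m then cnj D else 0)" using mN by simp
    finally show ?thesis .
  qed
  have C: "cnv N v p - cnv N u p = D + cnj D"
  proof -
    have "cnv N v p - cnv N u p = (\<Sum>i<N. (if i \<le> p then v i * cnj (v (p - i)) else 0) - (if i \<le> p then u i * cnj (u (p - i)) else 0))"
      unfolding cnv_def by (simp add: sum_subtractf)
    also have "\<dots> = (\<Sum>i<N. (if i = m then D else 0) + (if i = m - k then cnj D else 0))"
    proof (rule sum.cong[OF refl])
      fix i assume "i \<in> {..<N}"
      show "(if i \<le> p then v i * cnj (v (p - i)) else 0) - (if i \<le> p then u i * cnj (u (p - i)) else 0) = (if i = m then D else 0) + (if i = m - k then cnj D else 0)"
      proof -
        consider "i > m" | "i = m" | "i = m - k" | "i < m - k" | "m - k < i \<and> i < m" by linarith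
        then show ?thesis
        proof cases
          case 1 then show ?thesis using u0 v0 k1 km p_def by auto
        next
          case 2 then have "p - i = m - k" using p_def km by auto
          then show ?thesis using 2 D_def k1 km p_def by auto
        next
          case 3 then have "p - i = m" using p_def km by auto
          then show ?thesis using 3 D_def k1 km p_def by auto
        next
          case 4 then have "p - i > m" using p_def km by auto
          then show ?thesis using 4 u0 v0 by auto
        next
          case 5
          then have i1: "v i = c * u i" using vc by auto
          have "v (p - i) = c * u (p - i)" using vc 5 p_def km by auto
          then have "v i * cnj (v (p - i)) = (c * cnj c) * (u i * cnj (u (p - i)))"
            using i1 by (simp add: algebra_simps)
          then show ?thesis using 5 cc p_def by auto
        qed
      qed
    qed
    also have "\<dots> = D + cnj D" using mN by (simp add: sum.distrib)
    finally show ?thesis .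
  qed
  have "SS N v p - SS N u p = (acr N v p - acr N u p) + cnj (acr N v p - acr N u p) + (cnv N v p - cnv N u p)"
    unfolding SS_def using p0 by simp
  also have "\<dots> = (if k = m then 2 else 1) * (D + cnj D)" unfolding A C by auto
  finally have "(if k = m then 2 else 1) * (D + cnj D) = 0" using eq p_def by simp
  then have "(if k = m then 2 else 1) = (0::complex) \<or> D + cnj D = 0" by (simp only: mult_eq_0_iff)
  then have "D + cnj D = 0" by (cases "k = m") auto
  then have "Re (D + cnj D) = 0" by (simp only: zero_complex.sel)
  then have "Re D = 0" by simp
  then show ?thesis unfolding D_def by simp
qed

lemma lead_ex:
  fixes u :: "nat \<Rightarrow> complex"
  assumes "\<exists>i. u i \<noteq> 0" "\<forall>i\<ge>K. u i = 0"
  shows "\<exists>m<K. u m \<noteq> 0 \<and> (\<forall>i>m. u i = 0)"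
proof -
  define A where "A = {i. u i \<noteq> 0}"
  have fin: "finite A" using assms(2) unfolding A_def
    by (metis (mono_tags, lifting) finite_nat_set_iff_bounded mem_Collect_eq not_less)
  have ne: "A \<noteq> {}" using assms(1) A_def by auto
  define m where "m = Max A"
  have "m \<in> A" using fin ne m_def by simp
  moreover have "\<forall>i>m. u i = 0" using fin m_def A_def Max_ge by fastforce
  ultimately show ?thesis using assms(2) A_def by (metis mem_Collect_eq not_less)
qed

lemma cnj_sq_nz: "(z::complex) \<noteq> 0 \<Longrightarrow> z * cnj z \<noteq> 0" by simp

lemma sep:
  fixes u v :: "nat \<Rightarrow> complex"
  assumes u0: "\<forall>i>m. u i = 0" and um: "u m \<noteq> 0" and mK: "m < K"
    and v0: "(\<forall>i. v i = 0) \<or> (m' < m \<and> (\<forall>i>m'. v i = 0))"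
    and KN: "2*K - 2 < N"
    and e: "\<forall>p \<le> 2*K-2. SS N u p = SS N v p"
  shows False
proof -
  have mN: "m < N" using mK KN by linarith
  have "SS N v (2*m) = 0"
  proof (cases "\<forall>i. v i = 0")
    case True
    then have "v = (\<lambda>_. 0)" by auto
    then show ?thesis using SS_zero_fun by simp
  next
    case False then show ?thesis using v0 SS_zero_above[of m' v "2*m" N] by auto
  qed
  moreover have "SS N u (2*m) \<noteq> 0" using SS_lead[OF u0 mN] cnj_sq_nz[OF um] by simp
  moreover have "2*m \<le> 2*K-2" using mK by linarith
  ultimately show False using e by metis
qed

lemma phase2:
  fixes a b \<omega> :: "nat \<Rightarrow> complex"
  assumes az: "\<forall>i\<ge>K. a i = 0" and bz: "\<forall>i\<ge>K. b i = 0" and KN: "2*K - 2 < N"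
    and \<omega>1: "\<forall>k<K. norm (\<omega> k) = 1"
    and \<omega>r: "\<forall>j<K. \<forall>k<K. j \<noteq> k \<longrightarrow> \<omega> j * cnj (\<omega> k) \<notin> \<real>"
    and e1: "\<forall>p \<le> 2*K-2. SS N a p = SS N b p"
    and e2: "\<forall>p \<le> 2*K-2. SS N (\<lambda>i. \<omega> i * a i) p = SS N (\<lambda>i. \<omega> i * b i) p"
  shows "\<exists>c. norm c = 1 \<and> (\<forall>i. b i = c * a i)"
proof (cases "\<forall>i. a i = 0")
  case True
  have "\<forall>i. b i = 0"
  proof (rule ccontr)
    assume "\<not> (\<forall>i. b i = 0)"
    then obtain m where m: "m < K" "b m \<noteq> 0" "\<forall>i>m. b i = 0" using lead_ex[OF _ bz] by auto
    show False using sep[OF m(3) m(2) m(1) _ KN, of a] True e1 by auto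
  qed
  then show ?thesis using True by (intro exI[of _ 1]) auto
next
  case False
  then obtain m where m: "m < K" "a m \<noteq> 0" "\<forall>i>m. a i = 0" using lead_ex[OF _ az] by auto
  have bnz: "\<not> (\<forall>i. b i = 0)"
    using sep[OF m(3) m(2) m(1) _ KN, of b] e1 by auto
  then obtain m' where m': "m' < K" "b m' \<noteq> 0" "\<forall>i>m'. b i = 0" using lead_ex[OF _ bz] by auto
  have "m = m'"
  proof (rule ccontr)
    assume "m \<noteq> m'"
    then consider "m < m'" | "m' < m" by linarith
    then show False
    proof cases
      case 1 then show False using sep[OF m'(3) m'(2) m'(1) _ KN, of a m] m(3) e1 by auto
    next
      case 2 then show False using sep[OF m(3) m(2) m(1) _ KN, of b m'] m'(3) e1 by auto
    qed
  qed
  then have bm: "b m \<noteq> 0" "\<forall>i>m. b i = 0" using m' by auto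
  have mN: "m < N" using m KN by linarith
  have "SS N a (2*m) = SS N b (2*m)" using e1 m(1) by auto
  then have sq: "a m * cnj (a m) = b m * cnj (b m)"
    using SS_lead[OF m(3) mN] SS_lead[OF bm(2) mN] by (cases "m = 0") auto
  define c where "c = b m / a m"
  have "c * cnj c = (b m * cnj (b m)) / (a m * cnj (a m))" by (simp add: c_def)
  then have cc: "c * cnj c = 1" using sq m(2) bm(1) by simp
  have cn: "norm c = 1"
  proof -
    have "complex_of_real ((norm c)^2) = 1" using cc complex_norm_square by metis
    then have "(norm c)^2 = 1" by (metis of_real_eq_1_iff)
    then show ?thesis using norm_ge_zero[of c] by (auto simp add: power2_eq_1_iff)
  qed
  have ind: "k \<le> m + 1 \<Longrightarrow> \<forall>i. m < i + k \<longrightarrow> b i = c * a i" for k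
  proof (induction k)
    case 0 then show ?case using m(3) bm(2) by auto
    next
    case (Suc k)
    then have IH: "\<forall>i. m < i + k \<longrightarrow> b i = c * a i" and km: "k \<le> m" by auto
    have new: "b (m - k) = c * a (m - k)"
    proof (cases "k = 0")
      case True then show ?thesis using c_def m(2) by simp
    next
      case False
      then have k1: "1 \<le> k" by simp
      have p: "2*m - k \<le> 2*K-2" using m(1) km by linarith
      have r1: "Re (b m * cnj (b (m-k)) - a m * cnj (a (m-k))) = 0"
        using step[OF m(3) bm(2) k1 km mN IH cc] e1 p by auto
      have r2: "Re ((\<omega> m * b m) * cnj (\<omega> (m-k) * b (m-k)) - (\<omega> m * a m) * cnj (\<omega> (m-k) * a (m-k))) = 0"
        using step[of m "\<lambda>i. \<omega> i * a i" "\<lambda>i. \<omega> i * b i" k N c] m(3) bm(2) k1 km mN IH cc e2 p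
        by auto
      define D where "D = b m * cnj (b (m-k)) - a m * cnj (a (m-k))"
      have "(\<omega> m * b m) * cnj (\<omega> (m-k) * b (m-k)) - (\<omega> m * a m) * cnj (\<omega> (m-k) * a (m-k))
          = (\<omega> m * cnj (\<omega> (m-k))) * D" unfolding D_def by (simp add: algebra_simps)
      then have r2': "Re ((\<omega> m * cnj (\<omega> (m-k))) * D) = 0" using r2 by simp
      have "\<omega> m * cnj (\<omega> (m-k)) \<notin> \<real>" using \<omega>r m(1) k1 km by auto
      moreover have "Re D = 0" using r1 unfolding D_def .
      ultimately have "D = 0" using nonreal_zero[of D] r2' by blast
      then have "c * a m * cnj (b (m-k)) = a m * cnj (a (m-k))" using D_def c_def m(2) by simp
      then have "c * cnj (b (m-k)) = cnj (a (m-k))" using m(2) by (simp add: algebra_simps)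
      then have "cnj c * c * cnj (b (m-k)) = cnj c * cnj (a (m-k))" by (simp add: algebra_simps)
      then have "cnj (b (m-k)) = cnj c * cnj (a (m-k))" using cc by (simp add: algebra_simps)
      then have "cnj (b (m-k)) = cnj (c * a (m-k))" by simp
      then show ?thesis by (metis complex_cnj_cnj)
    qed
    show ?case
    proof (intro allI impI)
      fix i assume "m < i + Suc k"
      then have "m < i + k \<or> i = m - k" using km by linarith
      then show "b i = c * a i" using IH new by auto
    qed
  qed
  show ?thesis using ind[of "m+1"] cn by auto
qed



lemma per_nat: "periodic P z \<Longrightarrow> z (r + int n * int P) = z r"
proof (induction n arbitrary: r)
  case 0 then show ?case by simp
next
  case (Suc n)
  have "z (r + int (Suc n) * int P) = z ((r + int n * int P) + int P)" by (simp add: algebra_simps)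
  also have "\<dots> = z (r + int n * int P)" using Suc.prems unfolding periodic_def by blast
  finally show ?case using Suc by simp
qed

lemma per_int: assumes "periodic P z" shows "z (r + k * int P) = z r"
proof (cases "k \<ge> 0")
  case True then show ?thesis using per_nat[OF assms, of r "nat k"] by simp
next
  case False
  have "z ((r + k * int P) + int (nat (-k)) * int P) = z (r + k * int P)" using per_nat[OF assms] by blast
  then show ?thesis using False by simp
qed

lemma per_mod: assumes "periodic P z" shows "z (r mod int P) = z r"
proof -
  have "r = r mod int P + (r div int P) * int P" by simp
  then show ?thesis using per_int[OF assms, of "r mod int P" "r div int P"] by metis
qed

lemma sum_shift:
  fixes g :: "int \<Rightarrow> complex"
  assumes "periodic P g" "P > 0"
  shows "(\<Sum>q\<in>{0..<int P}. g (q + c)) = (\<Sum>q\<in>{0..<int P}. g q)"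
proof -
  have "(\<Sum>q\<in>{0..<int P}. g (q + c)) = (\<Sum>q\<in>{0..<int P}. g ((q + c) mod int P))"
    using per_mod[OF assms(1)] by simp
  also have "\<dots> = (\<Sum>q\<in>{0..<int P}. g q)"
  proof (rule sum.reindex_bij_witness[of _ "\<lambda>q. (q - c) mod int P" "\<lambda>q. (q + c) mod int P"])
    fix a assume a: "a \<in> {0..<int P}"
    have "((a + c) mod int P - c) mod int P = (a + c - c) mod int P" by (simp add: mod_diff_left_eq)
    then show "((a + c) mod int P - c) mod int P = a" using a by simp
    show "(a + c) mod int P \<in> {0..<int P}" using assms(2) by simp
    show "(a - c) mod int P \<in> {0..<int P}" using assms(2) by simp
    have "((a - c) mod int P + c) mod int P = (a - c + c) mod int P" by (simp add: mod_add_left_eq)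
    then show "((a - c) mod int P + c) mod int P = a" using a by simp
  qed simp
  finally show ?thesis .
qed

lemma sum_neg:
  fixes g :: "int \<Rightarrow> complex"
  assumes "periodic P g" "P > 0"
  shows "(\<Sum>q\<in>{0..<int P}. g (- q)) = (\<Sum>q\<in>{0..<int P}. g q)"
proof -
  have "(\<Sum>q\<in>{0..<int P}. g (- q)) = (\<Sum>q\<in>{0..<int P}. g ((- q) mod int P))"
    using per_mod[OF assms(1)] by simp
  also have "\<dots> = (\<Sum>q\<in>{0..<int P}. g q)"
  proof (rule sum.reindex_bij_witness[of _ "\<lambda>q. (- q) mod int P" "\<lambda>q. (- q) mod int P"])
    fix a assume a: "a \<in> {0..<int P}"
    have "(- ((- a) mod int P)) mod int P = (- (- a)) mod int P" by (simp add: mod_minus_eq)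
    then show "(- ((- a) mod int P)) mod int P = a" using a by simp
    then show "(- ((- a) mod int P)) mod int P = a" .
    show "(- a) mod int P \<in> {0..<int P}" using assms(2) by simp
    show "(- a) mod int P \<in> {0..<int P}" using assms(2) by simp
  qed simp
  finally show ?thesis .
qed

lemma sum_int_nat: "(\<Sum>q\<in>{0..<int P}. f q) = (\<Sum>i<P. f (int i))"
proof -
  have "{0..<int P} = int ` {..<P}" using image_atLeastZeroLessThan_int[of "int P"] by simp
  then show ?thesis by (simp add: sum.reindex)
qed

lemma phase1:
  fixes z :: "int \<Rightarrow> complex"
  assumes M1: "M \<ge> 1" and PM: "P = 4*M-3" and per: "periodic P z"
    and zz: "\<forall>p\<in>{int M..int (4*M-4)}. z p = 0" and pM: "p \<le> 2*M-2"
  shows "CirAut P (\<lambda>q. z q + revop z q) (int p) = SS P (\<lambda>i. if i < M then z (int i) else 0) p"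
proof -
  define a where "a = (\<lambda>i. if i < M then z (int i) else 0)"
  have P0: "P > 0" using PM M1 by simp
  have zn: "z (int n) = a n" if "n < P" for n
    using zz that PM unfolding a_def by auto
  have aM: "a n = 0" if "n \<ge> M" for n using that a_def by simp
  have zP: "z r = z (r + int P)" for r using per unfolding periodic_def by simp
  have "CirAut P (\<lambda>q. z q + revop z q) (int p) =
     (\<Sum>q\<in>{0..<int P}. (z q + z (-q)) * cnj (z (q - int p) + z (- (q - int p))))"
    unfolding CirAut_def inner_ZP_def transl_def revop_def by simp
  also have "\<dots> = (\<Sum>q\<in>{0..<int P}. z q * cnj (z (q - int p)))
     + (\<Sum>q\<in>{0..<int P}. z q * cnj (z (int p - q)))
     + (\<Sum>q\<in>{0..<int P}. z (-q) * cnj (z (q - int p)))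
     + (\<Sum>q\<in>{0..<int P}. z (-q) * cnj (z (int p - q)))"
    by (simp add: sum.distrib algebra_simps)
  finally have E: "CirAut P (\<lambda>q. z q + revop z q) (int p) = \<dots>" .
  have T4': "(\<Sum>q\<in>{0..<int P}. z q * cnj (z (int p + q))) = acr P a p"
  proof -
    have "(\<Sum>q\<in>{0..<int P}. z q * cnj (z (int p + q))) = (\<Sum>i<P. z (int i) * cnj (z (int p + int i)))" by (rule sum_int_nat)
    also have "\<dots> = acr P a p" unfolding acr_def
    proof (rule sum.cong[OF refl])
      fix i assume i: "i \<in> {..<P}"
      show "z (int i) * cnj (z (int p + int i)) = a i * cnj (a (i + p))"
      proof (cases "i < M")
        case True
        then have "i + p < P" using PM pM M1 by linarith
        then show ?thesis using zn[of i] zn[of "i+p"] i by (simp add: add.commute)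
      next
        case False then show ?thesis using zn[of i] i aM by simp
      qed
    qed
    finally show ?thesis .
  qed
  have pg4: "periodic P (\<lambda>q. z q * cnj (z (int p + q)))"
    unfolding periodic_def
  proof
    fix q
    have "z (int p + (q + int P)) = z (int p + q)" using zP[of "int p + q"] by (simp add: algebra_simps)
    then show "z (q + int P) * cnj (z (int p + (q + int P))) = z q * cnj (z (int p + q))" using zP[of q] by simp
  qed
  have T4: "(\<Sum>q\<in>{0..<int P}. z (-q) * cnj (z (int p - q))) = acr P a p"
    using sum_neg[OF pg4 P0] T4' by simp
  have pg1: "periodic P (\<lambda>q. z (q + int p) * cnj (z q))"
    unfolding periodic_def
  proof
    fix q
    have "z (q + int P + int p) = z (q + int p)" using zP[of "q + int p"] by (simp add: algebra_simps)
    then show "z (q + int P + int p) * cnj (z (q + int P)) = z (q + int p) * cnj (z q)" using zP[of q] by simp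
  qed
  have s1: "(\<Sum>q\<in>{0..<int P}. z q * cnj (z (q - int p))) = (\<Sum>q\<in>{0..<int P}. z (q + int p) * cnj (z q))"
    using sum_shift[OF pg1 P0, of "- int p"] by simp
  have s2: "(\<Sum>q\<in>{0..<int P}. z (q + int p) * cnj (z q)) = cnj (\<Sum>q\<in>{0..<int P}. z q * cnj (z (int p + q)))"
    unfolding cnj_sum by (rule sum.cong[OF refl]) (simp add: ac_simps)
  have T1: "(\<Sum>q\<in>{0..<int P}. z q * cnj (z (q - int p))) = cnj (acr P a p)"
    using s1 s2 T4' by simp
  have T2: "(\<Sum>q\<in>{0..<int P}. z q * cnj (z (int p - q))) = cnv P a p"
  proof -
    have "(\<Sum>q\<in>{0..<int P}. z q * cnj (z (int p - q))) = (\<Sum>i<P. z (int i) * cnj (z (int p - int i)))"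
      by (rule sum_int_nat)
    also have "\<dots> = cnv P a p" unfolding cnv_def
    proof (rule sum.cong[OF refl])
      fix i assume i: "i \<in> {..<P}"
      show "z (int i) * cnj (z (int p - int i)) = (if i \<le> p then a i * cnj (a (p - i)) else 0)"
      proof (cases "i < M")
        case True
        show ?thesis
        proof (cases "i \<le> p")
          case True
          then have "int p - int i = int (p - i)" "p - i < P" using PM pM M1 by auto
          then show ?thesis using zn[of i] zn[of "p-i"] i True by simp
        next
          case False
          have ee: "int p - int i + int P = int (p + P - i)" using i by auto
          have "z (int p - int i) = z (int (p + P - i))" using zP[of "int p - int i"] unfolding ee .
          also have "\<dots> = 0" using zn[of "p + P - i"] aM[of "p + P - i"] \<open>i < M\<close> False PM by auto
          finally show ?thesis using False by simp
        qed
      next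
        case False then show ?thesis using zn[of i] i aM by simp
      qed
    qed
    finally show ?thesis .
  qed
  have pg3: "periodic P (\<lambda>q. z q * cnj (z (- q - int p)))"
    unfolding periodic_def
  proof
    fix q
    have "z (- (q + int P) - int p) = z (- q - int p)" using zP[of "- (q + int P) - int p"] by (simp add: algebra_simps)
    then show "z (q + int P) * cnj (z (- (q + int P) - int p)) = z q * cnj (z (- q - int p))" using zP[of q] by simp
  qed
  have T3: "(\<Sum>q\<in>{0..<int P}. z (-q) * cnj (z (q - int p))) = (if p = 0 then a 0 * cnj (a 0) else 0)"
  proof -
    have "(\<Sum>q\<in>{0..<int P}. z (-q) * cnj (z (q - int p))) = (\<Sum>q\<in>{0..<int P}. z q * cnj (z (- q - int p)))"
      using sum_neg[OF pg3 P0] by simp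
    also have "\<dots> = (\<Sum>i<P. z (int i) * cnj (z (- int i - int p)))" by (rule sum_int_nat)
    also have "\<dots> = (\<Sum>i<P. if i = 0 then (if p = 0 then a 0 * cnj (a 0) else 0) else 0)"
    proof (rule sum.cong[OF refl])
      fix i assume i: "i \<in> {..<P}"
      show "z (int i) * cnj (z (- int i - int p)) = (if i = 0 then (if p = 0 then a 0 * cnj (a 0) else 0) else 0)"
      proof (cases "i < M")
        case True
        show ?thesis
        proof (cases "i = 0 \<and> p = 0")
          case True then show ?thesis using zn[of 0] P0 by simp
        next
          case False
          have ee: "- int i - int p + int P = int (P - i - p)" using \<open>i < M\<close> pM PM by auto
          have "z (- int i - int p) = z (int (P - i - p))" using zP[of "- int i - int p"] unfolding ee .
          also have "\<dots> = 0" using zn[of "P - i - p"] aM[of "P - i - p"] \<open>i < M\<close> False PM pM by auto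
          finally show ?thesis using False by auto
        qed
      next
        case False then show ?thesis using zn[of i] i aM M1 by auto
      qed
    qed
    also have "\<dots> = (if p = 0 then a 0 * cnj (a 0) else 0)" using P0 by simp
    finally show ?thesis .
  qed
  show ?thesis unfolding E T1 T2 T3 T4 SS_def a_def[symmetric] by simp
qed


theorem theorem5:
  fixes M P :: nat and \<omega> :: "nat \<Rightarrow> complex" and x y :: "int \<Rightarrow> complex"
  assumes "M \<ge> 1" and "P = 4 * M - 3"
    and "\<forall>k<P. norm (\<omega> k) = 1"
    and "\<forall>j<P. \<forall>k<P. j \<noteq> k \<longrightarrow> \<omega> j * cnj (\<omega> k) \<notin> \<real>"
    and "periodic P x" and "periodic P y"
    and "\<forall>p\<in>{int M..int (4 * M - 4)}. x p = 0"
    and "\<forall>p\<in>{int M..int (4 * M - 4)}. y p = 0"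
    and "CirAut P (\<lambda>p. x p + revop x p) = CirAut P (\<lambda>p. y p + revop y p)"
    and "CirAut P (\<lambda>p. diagop P \<omega> x p + revop (diagop P \<omega> x) p)
       = CirAut P (\<lambda>p. diagop P \<omega> y p + revop (diagop P \<omega> y) p)"
  shows "\<exists>c::complex. norm c = 1 \<and> y = (\<lambda>p. c * x p)"
proof -
  note M1 = assms(1) and PM = assms(2)
  have P0: "P > 0" using M1 PM by simp
  define a where "a = (\<lambda>i. if i < M then x (int i) else 0)"
  define b where "b = (\<lambda>i. if i < M then y (int i) else 0)"
  have perE: "periodic P (diagop P \<omega> z)" if "periodic P z" for z
    using that unfolding periodic_def diagop_def by simp
  have zE: "\<forall>p\<in>{int M..int (4 * M - 4)}. diagop P \<omega> z p = 0"
    if "\<forall>p\<in>{int M..int (4 * M - 4)}. z p = 0" for z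
    using that unfolding diagop_def by simp
  have aE: "(\<lambda>i. if i < M then diagop P \<omega> z (int i) else 0) = (\<lambda>i. \<omega> i * (if i < M then z (int i) else 0))" for z
  proof
    fix i
    show "(if i < M then diagop P \<omega> z (int i) else 0) = \<omega> i * (if i < M then z (int i) else 0)"
    proof (cases "i < M")
      case True
      then have "int i mod int P = int i" using PM by simp
      then show ?thesis using True unfolding diagop_def by simp
    qed simp
  qed
  have e1: "\<forall>p \<le> 2*M-2. SS P a p = SS P b p"
  proof (intro allI impI)
    fix p assume p: "p \<le> 2*M-2"
    show "SS P a p = SS P b p"
      using phase1[OF M1 PM assms(5) assms(7) p] phase1[OF M1 PM assms(6) assms(8) p] assms(9)
      unfolding a_def b_def by metis
  qed
  have e2: "\<forall>p \<le> 2*M-2. SS P (\<lambda>i. \<omega> i * a i) p = SS P (\<lambda>i. \<omega> i * b i) p"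
  proof (intro allI impI)
    fix p assume p: "p \<le> 2*M-2"
    show "SS P (\<lambda>i. \<omega> i * a i) p = SS P (\<lambda>i. \<omega> i * b i) p"
      using phase1[OF M1 PM perE[OF assms(5)] zE[OF assms(7)] p]
        phase1[OF M1 PM perE[OF assms(6)] zE[OF assms(8)] p] assms(10)
      unfolding a_def b_def aE by metis
  qed
  have az: "\<forall>i\<ge>M. a i = 0" and bz: "\<forall>i\<ge>M. b i = 0" unfolding a_def b_def by auto
  have KN: "2*M - 2 < P" using PM M1 by linarith
  have w1: "\<forall>k<M. norm (\<omega> k) = 1" using assms(3) PM by auto
  have w2: "\<forall>j<M. \<forall>k<M. j \<noteq> k \<longrightarrow> \<omega> j * cnj (\<omega> k) \<notin> \<real>" using assms(4) PM by auto
  obtain c where c: "norm c = 1" "\<forall>i. b i = c * a i"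
    using phase2[OF az bz KN w1 w2 e1 e2] by blast
  have "y = (\<lambda>p. c * x p)"
  proof
    fix r
    define n where "n = nat (r mod int P)"
    have rn: "r mod int P = int n" using P0 n_def by simp
    have nP: "n < P" using P0 n_def by (simp add: nat_less_iff)
    have yr: "y r = y (int n)" using per_mod[OF assms(6), of r] rn by simp
    have xr: "x r = x (int n)" using per_mod[OF assms(5), of r] rn by simp
    show "y r = c * x r"
    proof (cases "n < M")
      case True then show ?thesis using c(2) yr xr unfolding a_def b_def by metis
    next
      case False
      then have "int n \<in> {int M..int (4 * M - 4)}" using nP PM by auto
      then show ?thesis using assms(7,8) yr xr by simp
    qed
  qed
  then show ?thesis using c(1) by blast
qed

end
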